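(* For any instance of MPMD or MBPMD, the connection cost $\mathrm{dist}(\mathrm{pos}(u),\mathrm{pos}(v))$ of every matching edge $(u,v)$ created by Greedy Dual is at most $2\sum_{S\subseteq V}\mathrm{sur}(S)\,y_S(T)$, where $V$ is the set of all requests and $T$ is the time at which Greedy Dual matches the last request.
   Context: Problem (MPMD / MBPMD). Let $(\mathcal{X},\mathrm{dist})$ be a metric space. An instance consists of $2m$ requests $u_1,\dots,u_{2m}$. Each request $u$ is a triple $(\mathrm{pos}(u),\mathrm{atime}(u),\mathrm{sgn}(u))$, where $\mathrm{pos}(u)\in\mathcal{X}$ is its location and $\mathrm{atime}(u)\ge0$ is its arrival time, with arrival times nondecreasing. In MPMD, $\mathrm{sgn}(u)=0$ for all requests. In MBPMD, exactly $m$ requests have sign $+1$ and $m$ have sign $-1$. At time $\tau$, an algorithm may match two arrived, unmatched requests $u,v$ with $\mathrm{sgn}(u)=-\mathrm{sgn}(v)$, at cost $\mathrm{dist}(\mathrm{pos}(u),\mathrm{pos}(v))$ (connection cost) plus $(\tau-\mathrm{atime}(u))+(\tau-\mathrm{atime}(v))$ (waiting costs). All requests must eventually be matched. Notation. Edges are unordered pairs $\{u,v\}$ of distinct requests with $\mathrm{sgn}(u)=-\mathrm{sgn}(v)$. For a set $S$ of requests, $\delta(S)$ is the set of edges with exactly one endpoint in $S$. In MPMD, $\mathrm{sur}(S)=|S|\bmod 2$; in MBPMD, $\mathrm{sur}(S)=|\sum_{u\in S}\mathrm{sgn}(u)|$. For an edge $e=(u,v)$, $\mathrm{cost}(e)=\mathrm{dist}(\mathrm{pos}(u),\mathrm{pos}(v))+|\mathrm{atime}(u)-\mathrm{atime}(v)|$.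 Algorithm Greedy Dual (GD). GD maintains a dual variable $y_S\ge0$ for every set $S$ of already-arrived requests; $y_S(\tau)$ denotes its value at time $\tau$. It also maintains a partition of the arrived requests into active sets, with $\mathcal{A}(u)$ denoting the active set containing $u$. An active set is growing if it contains at least one free request, and non-growing otherwise. - When a request $u$ arrives, $\mathcal{A}(u)\leftarrow\{u\}$ becomes a new active set, and $y_S\leftarrow 0$ for every new set $S$ containing $u$. - Tight-constraint event: while there is an edge $e=(u,v)$ between arrived requests with $\mathcal{A}(u)\neq\mathcal{A}(v)$ and $\sum_{S:\,e\in\delta(S)}y_S=\mathrm{cost}(e)$, GD does the following. It merges the two sets: $S=\mathcal{A}(u)\cup\mathcal{A}(v)$ becomes active and $\mathcal{A}(w)\leftarrow S$ for all $w\in S$, while $\mathcal{A}(u)$ and $\mathcal{A}(v)$ become inactive. It marks the edge $e$. Then, while there are free $u',v'\in S$ with $\mathrm{sgn}(u')=-\mathrm{sgn}(v')$, it matches $u'$ with $v'$ at the current time. - At all other times, $y_S$ increases continuously at rate $1$ (the same rate as time) for every active growing set $S$; all other dual variables stay constant. *)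

theory Defs
  imports Complex_Main
begin

definition instance_ok :: "'r set \<Rightarrow> ('r \<Rightarrow> 'p::metric_space) \<Rightarrow> ('r \<Rightarrow> real) \<Rightarrow> ('r \<Rightarrow> int) \<Rightarrow> bool" where
  "instance_ok V pos atime sg \<longleftrightarrow> finite V \<and> (\<forall>u\<in>V. atime u \<ge> 0) \<and>
     ((\<forall>u\<in>V. sg u = 0) \<and> even (card V) \<comment> \<open>MPMD\<close>
      \<or> (\<forall>u\<in>V. sg u = 1 \<or> sg u = -1) \<and> card {u\<in>V. sg u = 1} = card {u\<in>V. sg u = -1}) \<comment> \<open>MBPMD\<close>"

definition sur :: "'r set \<Rightarrow> ('r \<Rightarrow> int) \<Rightarrow> 'r set \<Rightarrow> real" where
  "sur V sg S = (if \<forall>u\<in>V. sg u = 0 then real (card S mod 2)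
                 else \<bar>\<Sum>u\<in>S. real_of_int (sg u)\<bar>)"

definition is_edge :: "('r \<Rightarrow> int) \<Rightarrow> 'r \<Rightarrow> 'r \<Rightarrow> bool" where
  "is_edge sg u v \<longleftrightarrow> u \<noteq> v \<and> sg u = - sg v"

definition cost :: "('r \<Rightarrow> 'p::metric_space) \<Rightarrow> ('r \<Rightarrow> real) \<Rightarrow> 'r \<Rightarrow> 'r \<Rightarrow> real" where
  "cost pos atime u v = dist (pos u) (pos v) + \<bar>atime u - atime v\<bar>"

definition load :: "'r set \<Rightarrow> ('r set \<Rightarrow> real) \<Rightarrow> 'r \<Rightarrow> 'r \<Rightarrow> real" where
  "load V y u v = (\<Sum>S\<in>{S. S \<subseteq> V \<and> ((u \<in> S) \<noteq> (v \<in> S))}. y S)"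

text \<open>State of Greedy Dual: current time, arrived requests, active sets (a partition of
the arrived requests), dual variables, and the matching edges created so far together
with the time at which they were created.\<close>
record 'r gd_state =
  clock :: real
  arrived :: "'r set"
  act :: "'r set set"
  yv :: "'r set \<Rightarrow> real"
  matches :: "('r \<times> 'r \<times> real) set"

definition gd_init :: "'r gd_state" where
  "gd_init = \<lparr>clock = 0, arrived = {}, act = {}, yv = (\<lambda>_. 0), matches = {}\<rparr>"

definition free :: "'r gd_state \<Rightarrow> 'r \<Rightarrow> bool" where
  "free s u \<longleftrightarrow> u \<in> arrived s \<and> \<not> (\<exists>v t. (u, v, t) \<in> matches s \<or> (v, u, t) \<in> matches s)"

definition actset :: "'r gd_state \<Rightarrow> 'r \<Rightarrow> 'r set" where
  "actset s u = (THE A. A \<in> act s \<and> u \<in> A)"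

definition growing :: "'r gd_state \<Rightarrow> 'r set \<Rightarrow> bool" where
  "growing s A \<longleftrightarrow> (\<exists>u\<in>A. free s u)"

definition tight :: "'r set \<Rightarrow> ('r \<Rightarrow> 'p::metric_space) \<Rightarrow> ('r \<Rightarrow> real) \<Rightarrow> ('r \<Rightarrow> int)
                     \<Rightarrow> 'r gd_state \<Rightarrow> 'r \<Rightarrow> 'r \<Rightarrow> bool" where
  "tight V pos atime sg s u v \<longleftrightarrow> u \<in> arrived s \<and> v \<in> arrived s \<and> is_edge sg u v \<and>
     actset s u \<noteq> actset s v \<and> load V (yv s) u v = cost pos atime u v"

text \<open>One step of Greedy Dual (nondeterministic where the algorithm leaves choices open).\<close>
inductive gd_step :: "'r set \<Rightarrow> ('r \<Rightarrow> 'p::metric_space) \<Rightarrow> ('r \<Rightarrow> real) \<Rightarrow> ('r \<Rightarrow> int)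
                      \<Rightarrow> 'r gd_state \<Rightarrow> 'r gd_state \<Rightarrow> bool"
  for V pos atime sg where
  arrive:
    "\<lbrakk> u \<in> V; u \<notin> arrived s; atime u = clock s \<rbrakk> \<Longrightarrow>
     gd_step V pos atime sg s
       (s\<lparr> arrived := insert u (arrived s), act := insert {u} (act s),
           yv := (\<lambda>S. if u \<in> S then 0 else yv s S) \<rparr>)"
| merge:
    "\<lbrakk> tight V pos atime sg s u v;
       S = actset s u \<union> actset s v;
       \<forall>(a, b)\<in>P. a \<in> S \<and> b \<in> S \<and> a \<noteq> b \<and> sg a = - sg b \<and> free s a \<and> free s b;
       \<forall>(a, b)\<in>P. \<forall>(c, d)\<in>P. (a, b) \<noteq> (c, d) \<longrightarrow> {a, b} \<inter> {c, d} = {};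
       s' = s\<lparr> act := insert S (act s - {actset s u, actset s v}),
               matches := matches s \<union> {(a, b, clock s) | a b. (a, b) \<in> P} \<rparr>;
       \<forall>a\<in>S. \<forall>b\<in>S. a \<noteq> b \<longrightarrow> sg a = - sg b \<longrightarrow> \<not> (free s' a \<and> free s' b) \<rbrakk> \<Longrightarrow>
     gd_step V pos atime sg s s'"
| advance:
    "\<lbrakk> \<tau>' > clock s;
       \<not> (\<exists>u v. tight V pos atime sg s u v);
       \<forall>u\<in>V. atime u < \<tau>' \<longrightarrow> u \<in> arrived s;
       y' = (\<lambda>S. yv s S + (if S \<in> act s \<and> growing s S then \<tau>' - clock s else 0));
       \<forall>u\<in>arrived s. \<forall>v\<in>arrived s. is_edge sg u v \<longrightarrow> actset s u \<noteq> actset s v \<longrightarrow>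
           load V y' u v \<le> cost pos atime u v \<rbrakk> \<Longrightarrow>
     gd_step V pos atime sg s (s\<lparr> clock := \<tau>', yv := y' \<rparr>)"

end

theory Submission
  imports Defs
begin

definition ind :: "'r \<Rightarrow> 'r set \<Rightarrow> real" where "ind x S = (if x \<in> S then 1 else 0)"

definition part :: "'r gd_state \<Rightarrow> bool" where
"part s \<longleftrightarrow> (\<forall>A\<in>act s. A \<noteq> {}) \<and> \<Union>(act s) = arrived s \<and> (\<forall>A\<in>act s. \<forall>B\<in>act s. A \<noteq> B \<longrightarrow> A \<inter> B = {})"

definition goodset :: "('r \<Rightarrow> int) \<Rightarrow> 'r gd_state \<Rightarrow> 'r set \<Rightarrow> bool" where
"goodset sg s A \<longleftrightarrow> card A mod 2 = card {x\<in>A. free s x} mod 2 \<and> (\<Sum>x\<in>A. sg x) = (\<Sum>x\<in>{x\<in>A. free s x}. sg x) \<and> (\<forall>a\<in>A. \<forall>b\<in>A. a \<noteq> b \<longrightarrow> sg a = - sg b \<longrightarrow> \<not> (free s a \<and> free s b))"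

definition distok :: "('r \<Rightarrow> 'p::metric_space) \<Rightarrow> ('r set \<Rightarrow> real) \<Rightarrow> 'r set \<Rightarrow> bool" where
"distok pos y A \<longleftrightarrow> (\<forall>x\<in>A. \<forall>z\<in>A. dist (pos x) (pos z) \<le> (\<Sum>S\<in>Pow A. (2 - ind x S - ind z S) * y S))"

definition inv :: "'r set \<Rightarrow> ('r \<Rightarrow> 'p::metric_space) \<Rightarrow> ('r \<Rightarrow> int) \<Rightarrow> 'r gd_state \<Rightarrow> bool" where
"inv V pos sg s \<longleftrightarrow> arrived s \<subseteq> V \<and> part s \<and>
 (\<forall>a b t. (a,b,t) \<in> matches s \<longrightarrow> (\<exists>A\<in>act s. a \<in> A \<and> b \<in> A)) \<and>
 (\<forall>A\<in>act s. goodset sg s A) \<and>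
 (\<forall>S. yv s S \<ge> 0) \<and>
 (\<forall>S. yv s S \<noteq> 0 \<longrightarrow> S \<noteq> {} \<and> (\<exists>A\<in>act s. S \<subseteq> A) \<and> sur V sg S \<ge> 1) \<and>
 (\<forall>A\<in>act s. distok pos (yv s) A)"

lemma coef_nn: "0 \<le> 2 - ind x S - ind z S" by (simp add: ind_def)

lemma sur_nn: "0 \<le> sur V sg S" by (simp add: sur_def)

lemma actset_eq: assumes "part s" "A \<in> act s" "x \<in> A" shows "actset s x = A"
  using assms unfolding actset_def part_def by (intro the_equality) blast+

lemma actset_in: assumes "part s" "x \<in> arrived s" shows "actset s x \<in> act s \<and> x \<in> actset s x"
proof -
  from assms obtain A where "A \<in> act s" "x \<in> A" unfolding part_def by blast
  then show ?thesis using actset_eq[OF assms(1)] by simp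
qed

lemma goodset_cong: "(\<And>x. x \<in> A \<Longrightarrow> free s' x = free s x) \<Longrightarrow> goodset sg s' A = goodset sg s A"
proof -
  assume h: "\<And>x. x \<in> A \<Longrightarrow> free s' x = free s x"
  hence "{x\<in>A. free s' x} = {x\<in>A. free s x}" by auto
  thus ?thesis unfolding goodset_def using h by auto
qed

lemma distok_cong: "(\<And>S. S \<subseteq> A \<Longrightarrow> y' S = y S) \<Longrightarrow> distok pos y' A = distok pos y A"
proof -
  assume h: "\<And>S. S \<subseteq> A \<Longrightarrow> y' S = y S"
  have "\<And>x z. (\<Sum>S\<in>Pow A. (2 - ind x S - ind z S) * y' S) = (\<Sum>S\<in>Pow A. (2 - ind x S - ind z S) * y S)"
    by (rule sum.cong) (auto simp: h)
  thus ?thesis unfolding distok_def by simp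
qed

lemma distok_mono:
  assumes "\<And>S. y S \<le> y' S" "distok pos y A" "finite A"
  shows "distok pos y' A"
  unfolding distok_def
proof (intro ballI)
  fix x z assume xz: "x \<in> A" "z \<in> A"
  have "dist (pos x) (pos z) \<le> (\<Sum>S\<in>Pow A. (2 - ind x S - ind z S) * y S)"
    using assms(2) xz unfolding distok_def by blast
  also have "\<dots> \<le> (\<Sum>S\<in>Pow A. (2 - ind x S - ind z S) * y' S)"
    by (rule sum_mono, rule mult_left_mono[OF assms(1) coef_nn])
  finally show "dist (pos x) (pos z) \<le> (\<Sum>S\<in>Pow A. (2 - ind x S - ind z S) * y' S)" .
qed

lemma distok_sub:
  assumes "distok pos y A" "A \<subseteq> B" "finite B" "\<And>S. y S \<ge> 0" "x \<in> A" "z \<in> A"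
  shows "dist (pos x) (pos z) \<le> (\<Sum>S\<in>Pow B. (2 - ind x S - ind z S) * y S)"
proof -
  have "dist (pos x) (pos z) \<le> (\<Sum>S\<in>Pow A. (2 - ind x S - ind z S) * y S)"
    using assms unfolding distok_def by blast
  also have "\<dots> \<le> (\<Sum>S\<in>Pow B. (2 - ind x S - ind z S) * y S)"
  proof (rule sum_mono2)
    show "finite (Pow B)" using assms(3) by simp
    show "Pow A \<subseteq> Pow B" using assms(2) by auto
    show "\<And>b. b \<in> Pow B - Pow A \<Longrightarrow> 0 \<le> (2 - ind x b - ind z b) * y b"
      using assms(4) coef_nn by (meson mult_nonneg_nonneg)
  qed
  finally show ?thesis .
qed

lemma sur_ge1:
  assumes inst: "instance_ok V pos atime sg" and AV: "A \<subseteq> V" and w: "w \<in> A" "free s w"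
  and g: "goodset sg s A"
  shows "sur V sg A \<ge> 1"
proof -
  have finV: "finite V" using inst unfolding instance_ok_def by blast
  hence finA: "finite A" using AV finite_subset by blast
  let ?F = "{x\<in>A. free s x}"
  have finF: "finite ?F" using finA by simp
  have wF: "w \<in> ?F" using w by simp
  have cardeq: "card A mod 2 = card ?F mod 2" and sumeq: "(\<Sum>x\<in>A. sg x) = (\<Sum>x\<in>?F. sg x)"
   and nop: "\<forall>a\<in>A. \<forall>b\<in>A. a \<noteq> b \<longrightarrow> sg a = - sg b \<longrightarrow> \<not> (free s a \<and> free s b)"
    using g unfolding goodset_def by auto
  show ?thesis
  proof (cases "\<forall>u\<in>V. sg u = 0")
    case True
    have "?F \<subseteq> {w}"
    proof
      fix x assume x: "x \<in> ?F"
      have "sg x = 0" "sg w = 0" using True AV w x by auto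
      hence "sg x = - sg w" by simp
      thus "x \<in> {w}" using nop x w by blast
    qed
    hence "?F = {w}" using wF by blast
    hence "card A mod 2 = 1" using cardeq by simp
    thus ?thesis using True unfolding sur_def by simp
  next
    case False
    hence pm: "\<forall>u\<in>V. sg u = 1 \<or> sg u = -1" using inst unfolding instance_ok_def by auto
    have same: "\<forall>x\<in>?F. sg x = sg w"
    proof
      fix x assume x: "x \<in> ?F"
      show "sg x = sg w"
      proof (rule ccontr)
        assume ne: "sg x \<noteq> sg w"
        hence "x \<noteq> w" by auto
        moreover have "sg x = - sg w"
        proof -
          have "x \<in> V" using x AV by auto
          hence a: "sg x = 1 \<or> sg x = -1" using pm by blast
          have b: "sg w = 1 \<or> sg w = -1" using pm w AV by blast
          from a b ne show ?thesis by auto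
        qed
        ultimately show False using nop x w by auto
      qed
    qed
    have "(\<Sum>x\<in>?F. sg x) = (\<Sum>x\<in>?F. sg w)" using same by (intro sum.cong) auto
    also have "\<dots> = int (card ?F) * sg w" by simp
    finally have s1: "(\<Sum>x\<in>A. sg x) = int (card ?F) * sg w" using sumeq by simp
    have "(\<Sum>u\<in>A. real_of_int (sg u)) = real_of_int (\<Sum>u\<in>A. sg u)" by simp
    also have "\<dots> = real (card ?F) * real_of_int (sg w)" using s1 by simp
    finally have s2: "(\<Sum>u\<in>A. real_of_int (sg u)) = real (card ?F) * real_of_int (sg w)" .
    have "sg w = 1 \<or> sg w = -1" using pm w AV by blast
    hence aw: "\<bar>real_of_int (sg w)\<bar> = 1" by auto
    have c1: "card ?F \<ge> 1" using finF wF by (metis One_nat_def Suc_leI card_gt_0_iff empty_iff)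
    have "sur V sg A = real (card ?F)" proof -
      have "sur V sg A = \<bar>\<Sum>u\<in>A. real_of_int (sg u)\<bar>" using False unfolding sur_def by (simp only: if_False)
      also have "\<dots> = real (card ?F)" using s2 aw by (simp add: abs_mult)
      finally show ?thesis .
    qed
    thus ?thesis using c1 by simp
  qed
qed

lemma load_bound:
  fixes y :: "'r set \<Rightarrow> real"
  assumes fin: "finite V" and ynn: "\<And>S. y S \<ge> 0"
    and ysup: "\<And>S. y S \<noteq> 0 \<Longrightarrow> \<exists>A\<in>\<A>. S \<subseteq> A"
    and disj: "\<forall>A\<in>\<A>. \<forall>B\<in>\<A>. A \<noteq> B \<longrightarrow> A \<inter> B = {}"
    and A1: "A1 \<in> \<A>" "A1 \<subseteq> V" "u \<in> A1" and A2: "A2 \<in> \<A>" "A2 \<subseteq> V" "v \<in> A2"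
  shows "load V y u v \<le> (\<Sum>S\<in>Pow A1. ind u S * y S) + (\<Sum>S\<in>Pow A2. ind v S * y S)"
proof -
  define g where "g S = (if S \<subseteq> A1 then ind u S * y S else 0) + (if S \<subseteq> A2 then ind v S * y S else 0)" for S
  have gnn: "g S \<ge> 0" for S unfolding g_def ind_def using ynn[of S] by auto
  let ?F = "{S. S \<subseteq> V \<and> ((u \<in> S) \<noteq> (v \<in> S))}"
  have pt: "y S \<le> g S" if S: "S \<in> ?F" for S
  proof (cases "y S = 0")
    case True thus ?thesis using gnn by simp
  next
    case False
    then obtain A where A: "A \<in> \<A>" "S \<subseteq> A" using ysup by blast
    show ?thesis
    proof (cases "u \<in> S")
      case True
      hence "A = A1" using A A1 disj by blast
      hence "S \<subseteq> A1" using A by simp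
      thus ?thesis unfolding g_def ind_def using True ynn[of S] by simp
    next
      case False
      hence "v \<in> S" using S by auto
      hence "A = A2" using A A2 disj by blast
      hence "S \<subseteq> A2" using A by simp
      thus ?thesis unfolding g_def ind_def using \<open>v \<in> S\<close> ynn[of S] by simp
    qed
  qed
  have "load V y u v = (\<Sum>S\<in>?F. y S)" unfolding load_def by simp
  also have "\<dots> \<le> (\<Sum>S\<in>?F. g S)" by (rule sum_mono) (rule pt)
  also have "\<dots> \<le> (\<Sum>S\<in>Pow V. g S)"
  proof (rule sum_mono2)
    show "finite (Pow V)" using fin by simp
    show "?F \<subseteq> Pow V" by auto
    show "\<And>b. b \<in> Pow V - ?F \<Longrightarrow> 0 \<le> g b" using gnn by blast
  qed
  also have "\<dots> = (\<Sum>S\<in>Pow V. if S \<subseteq> A1 then ind u S * y S else 0) + (\<Sum>S\<in>Pow V. if S \<subseteq> A2 then ind v S * y S else 0)"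
    unfolding g_def by (rule sum.distrib)
  also have "(\<Sum>S\<in>Pow V. if S \<subseteq> A1 then ind u S * y S else 0) = (\<Sum>S\<in>{S\<in>Pow V. S \<subseteq> A1}. ind u S * y S)"
    by (rule sum.inter_filter[symmetric]) (use fin in simp)
  also have "{S\<in>Pow V. S \<subseteq> A1} = Pow A1" using A1 by auto
  also have "(\<Sum>S\<in>Pow V. if S \<subseteq> A2 then ind v S * y S else 0) = (\<Sum>S\<in>{S\<in>Pow V. S \<subseteq> A2}. ind v S * y S)"
    by (rule sum.inter_filter[symmetric]) (use fin in simp)
  also have "{S\<in>Pow V. S \<subseteq> A2} = Pow A2" using A2 by auto
  finally show ?thesis .
qed

lemma merge_dist:
  fixes y :: "'r set \<Rightarrow> real" and pos :: "'r \<Rightarrow> 'p::metric_space"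
  assumes f1: "finite A1" and f2: "finite A2" and disj: "A1 \<inter> A2 = {}"
    and ynn: "\<And>S. y S \<ge> 0" and y0: "y {} = 0"
    and D1: "distok pos y A1" and D2: "distok pos y A2"
    and u: "u \<in> A1" and v: "v \<in> A2"
    and L: "dist (pos u) (pos v) \<le> (\<Sum>S\<in>Pow A1. ind u S * y S) + (\<Sum>S\<in>Pow A2. ind v S * y S)"
    and x: "x \<in> A1" and z: "z \<in> A2"
  shows "dist (pos x) (pos z) \<le> (\<Sum>S\<in>Pow (A1 \<union> A2). (2 - ind x S - ind z S) * y S)"
proof -
  let ?c = "\<lambda>S. (2 - ind x S - ind z S) * y S"
  have d1: "dist (pos x) (pos u) \<le> (\<Sum>S\<in>Pow A1. (2 - ind x S - ind u S) * y S)"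
    using D1 x u unfolding distok_def by blast
  have d2: "dist (pos v) (pos z) \<le> (\<Sum>S\<in>Pow A2. (2 - ind v S - ind z S) * y S)"
    using D2 z v unfolding distok_def by blast
  have tri: "dist (pos x) (pos z) \<le> dist (pos x) (pos u) + dist (pos u) (pos v) + dist (pos v) (pos z)"
    using dist_triangle[of "pos x" "pos z" "pos u"] dist_triangle[of "pos u" "pos z" "pos v"] by linarith
  have e1: "(\<Sum>S\<in>Pow A1. (2 - ind x S - ind u S) * y S) + (\<Sum>S\<in>Pow A1. ind u S * y S) = (\<Sum>S\<in>Pow A1. ?c S)"
  proof -
    have "(\<Sum>S\<in>Pow A1. (2 - ind x S - ind u S) * y S) + (\<Sum>S\<in>Pow A1. ind u S * y S)
       = (\<Sum>S\<in>Pow A1. (2 - ind x S - ind u S) * y S + ind u S * y S)" by (simp add: sum.distrib)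
    also have "\<dots> = (\<Sum>S\<in>Pow A1. ?c S)"
    proof (rule sum.cong[OF refl])
      fix S assume "S \<in> Pow A1"
      hence "z \<notin> S" using z disj by auto
      thus "(2 - ind x S - ind u S) * y S + ind u S * y S = ?c S" by (simp add: ind_def algebra_simps)
    qed
    finally show ?thesis .
  qed
  have e2: "(\<Sum>S\<in>Pow A2. ind v S * y S) + (\<Sum>S\<in>Pow A2. (2 - ind v S - ind z S) * y S) = (\<Sum>S\<in>Pow A2. ?c S)"
  proof -
    have "(\<Sum>S\<in>Pow A2. ind v S * y S) + (\<Sum>S\<in>Pow A2. (2 - ind v S - ind z S) * y S)
       = (\<Sum>S\<in>Pow A2. ind v S * y S + (2 - ind v S - ind z S) * y S)" by (simp add: sum.distrib)
    also have "\<dots> = (\<Sum>S\<in>Pow A2. ?c S)"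
    proof (rule sum.cong[OF refl])
      fix S assume "S \<in> Pow A2"
      hence "x \<notin> S" using x disj by auto
      thus "ind v S * y S + (2 - ind v S - ind z S) * y S = ?c S" by (simp add: ind_def algebra_simps)
    qed
    finally show ?thesis .
  qed
  have int: "Pow A1 \<inter> Pow A2 = {{}}" using disj by auto
  have un: "(\<Sum>S\<in>Pow A1. ?c S) + (\<Sum>S\<in>Pow A2. ?c S) = (\<Sum>S\<in>Pow A1 \<union> Pow A2. ?c S)"
    using sum.union_inter[of "Pow A1" "Pow A2" ?c] f1 f2 int y0 by simp
  have mono: "(\<Sum>S\<in>Pow A1 \<union> Pow A2. ?c S) \<le> (\<Sum>S\<in>Pow (A1 \<union> A2). ?c S)"
  proof (rule sum_mono2)
    show "finite (Pow (A1 \<union> A2))" using f1 f2 by simp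
    show "Pow A1 \<union> Pow A2 \<subseteq> Pow (A1 \<union> A2)" by auto
    show "\<And>b. b \<in> Pow (A1 \<union> A2) - (Pow A1 \<union> Pow A2) \<Longrightarrow> 0 \<le> ?c b"
      using ynn coef_nn by (meson mult_nonneg_nonneg)
  qed
  show ?thesis using tri d1 d2 L e1 e2 un mono by linarith
qed

lemma inv_init: "inv V pos sg gd_init"
  unfolding inv_def gd_init_def part_def by simp

lemma inv_arrive:
  assumes inv: "inv V pos sg s" and fin: "finite V" and u: "u \<in> V" "u \<notin> arrived s"
  shows "inv V pos sg (s\<lparr> arrived := insert u (arrived s), act := insert {u} (act s),
           yv := (\<lambda>S. if u \<in> S then 0 else yv s S) \<rparr>)" (is "inv V pos sg ?s")
proof -
  have AV: "arrived s \<subseteq> V" and P: "part s"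
    and M: "\<forall>a b t. (a,b,t) \<in> matches s \<longrightarrow> (\<exists>A\<in>act s. a \<in> A \<and> b \<in> A)"
    and G: "\<forall>A\<in>act s. goodset sg s A" and Y1: "\<forall>S. yv s S \<ge> 0"
    and Y2: "\<forall>S. yv s S \<noteq> 0 \<longrightarrow> S \<noteq> {} \<and> (\<exists>A\<in>act s. S \<subseteq> A) \<and> sur V sg S \<ge> 1"
    and D: "\<forall>A\<in>act s. distok pos (yv s) A"
    using inv unfolding inv_def by auto
  have Pn: "\<forall>A\<in>act s. A \<noteq> {}" and Pu: "\<Union>(act s) = arrived s"
    and Pd: "\<forall>A\<in>act s. \<forall>B\<in>act s. A \<noteq> B \<longrightarrow> A \<inter> B = {}" using P unfolding part_def by auto
  have um: "\<not> ((u,b,t) \<in> matches s \<or> (b,u,t) \<in> matches s)" for b t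
    using M Pu u(2) by blast
  have fr: "free ?s x \<longleftrightarrow> (x = u \<or> free s x)" for x
    using um unfolding free_def by auto
  have uA: "u \<notin> A" if "A \<in> act s" for A using that Pu u(2) by blast
  show ?thesis unfolding inv_def
  proof (intro conjI)
    show "arrived ?s \<subseteq> V" using AV u by simp
    show "part ?s" unfolding part_def using Pn Pu Pd uA by auto
    show "\<forall>a b t. (a,b,t) \<in> matches ?s \<longrightarrow> (\<exists>A\<in>act ?s. a \<in> A \<and> b \<in> A)" using M by auto
    show "\<forall>A\<in>act ?s. goodset sg ?s A"
    proof
      fix A assume "A \<in> act ?s"
      hence "A = {u} \<or> A \<in> act s" by simp
      thus "goodset sg ?s A"
      proof
        assume "A = {u}"
        moreover have "{x\<in>{u}. free ?s x} = {u}" using fr by auto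
        ultimately show ?thesis unfolding goodset_def by simp
      next
        assume A: "A \<in> act s"
        have "goodset sg ?s A = goodset sg s A" by (rule goodset_cong) (use fr uA A in auto)
        thus ?thesis using G A by simp
      qed
    qed
    show "\<forall>S. yv ?s S \<ge> 0" using Y1 by simp
    show "\<forall>S. yv ?s S \<noteq> 0 \<longrightarrow> S \<noteq> {} \<and> (\<exists>A\<in>act ?s. S \<subseteq> A) \<and> sur V sg S \<ge> 1"
      using Y2 by auto
    show "\<forall>A\<in>act ?s. distok pos (yv ?s) A"
    proof
      fix A assume "A \<in> act ?s"
      hence "A = {u} \<or> A \<in> act s" by simp
      thus "distok pos (yv ?s) A"
      proof
        assume A: "A = {u}"
        have "0 \<le> (\<Sum>S\<in>Pow A. (2 - ind u S - ind u S) * yv ?s S)"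
        proof (rule sum_nonneg)
          fix S
          have "0 \<le> yv ?s S" using Y1 by simp
          thus "0 \<le> (2 - ind u S - ind u S) * yv ?s S" using coef_nn by (meson mult_nonneg_nonneg)
        qed
        thus ?thesis unfolding distok_def using A by simp
      next
        assume A: "A \<in> act s"
        have "distok pos (yv ?s) A = distok pos (yv s) A" by (rule distok_cong) (use uA A in auto)
        thus ?thesis using D A by simp
      qed
    qed
  qed
qed

lemma inv_advance:
  assumes inv: "inv V pos sg s" and inst: "instance_ok V pos atime sg" and tau: "\<tau>' > clock s"
    and y': "y' = (\<lambda>S. yv s S + (if S \<in> act s \<and> growing s S then \<tau>' - clock s else 0))"
  shows "inv V pos sg (s\<lparr> clock := \<tau>', yv := y' \<rparr>)" (is "inv V pos sg ?s")
proof -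
  have fin: "finite V" using inst unfolding instance_ok_def by blast
  have AV: "arrived s \<subseteq> V" and P: "part s"
    and M: "\<forall>a b t. (a,b,t) \<in> matches s \<longrightarrow> (\<exists>A\<in>act s. a \<in> A \<and> b \<in> A)"
    and G: "\<forall>A\<in>act s. goodset sg s A" and Y1: "\<forall>S. yv s S \<ge> 0"
    and Y2: "\<forall>S. yv s S \<noteq> 0 \<longrightarrow> S \<noteq> {} \<and> (\<exists>A\<in>act s. S \<subseteq> A) \<and> sur V sg S \<ge> 1"
    and D: "\<forall>A\<in>act s. distok pos (yv s) A"
    using inv unfolding inv_def by auto
  have Pu: "\<Union>(act s) = arrived s" using P unfolding part_def by auto
  have fr: "free ?s x = free s x" for x unfolding free_def by simp
  have ge: "yv s S \<le> y' S" for S using y' tau by simp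
  show ?thesis unfolding inv_def
  proof (intro conjI)
    show "arrived ?s \<subseteq> V" using AV by simp
    show "part ?s" using P unfolding part_def by simp
    show "\<forall>a b t. (a,b,t) \<in> matches ?s \<longrightarrow> (\<exists>A\<in>act ?s. a \<in> A \<and> b \<in> A)" using M by simp
    show "\<forall>A\<in>act ?s. goodset sg ?s A"
    proof
      fix A assume A: "A \<in> act ?s"
      have "goodset sg ?s A = goodset sg s A" by (rule goodset_cong) (use fr in auto)
      thus "goodset sg ?s A" using G A by simp
    qed
    show "\<forall>S. yv ?s S \<ge> 0" using Y1 ge by (metis order_trans select_convs(4) surjective update_convs(1) update_convs(4))
    show "\<forall>S. yv ?s S \<noteq> 0 \<longrightarrow> S \<noteq> {} \<and> (\<exists>A\<in>act ?s. S \<subseteq> A) \<and> sur V sg S \<ge> 1"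
    proof (intro allI impI)
      fix S assume nz: "yv ?s S \<noteq> 0"
      show "S \<noteq> {} \<and> (\<exists>A\<in>act ?s. S \<subseteq> A) \<and> sur V sg S \<ge> 1"
      proof (cases "S \<in> act s \<and> growing s S")
        case True
        then obtain w where w: "w \<in> S" "free s w" unfolding growing_def by blast
        have "S \<subseteq> V" using True Pu AV by blast
        hence "sur V sg S \<ge> 1" using sur_ge1[OF inst _ w] G True by blast
        thus ?thesis using True w by auto
      next
        case False
        hence "yv s S \<noteq> 0" using nz y' by auto
        thus ?thesis using Y2 by simp
      qed
    qed
    show "\<forall>A\<in>act ?s. distok pos (yv ?s) A"
    proof
      fix A assume A: "A \<in> act ?s"
      have "finite A" using A Pu AV fin by (metis Union_upper finite_subset simps(3) surjective update_convs(1) update_convs(4))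
      thus "distok pos (yv ?s) A" using distok_mono[of "yv s" y' pos A] ge D A by simp
    qed
  qed
qed

lemma pairs_facts:
  fixes sg :: "'r \<Rightarrow> int"
  assumes fP: "finite P"
    and P1: "\<forall>(a, b)\<in>P. a \<noteq> b \<and> sg a = - sg b"
    and P2: "\<forall>(a, b)\<in>P. \<forall>(c, d)\<in>P. (a, b) \<noteq> (c, d) \<longrightarrow> {a, b} \<inter> {c, d} = {}"
  shows "card (fst ` P \<union> snd ` P) = 2 * card P \<and> (\<Sum>x\<in>fst ` P \<union> snd ` P. sg x) = 0"
proof -
  have i1: "inj_on fst P"
  proof (rule inj_onI)
    fix p q assume "p \<in> P" "q \<in> P" "fst p = fst q"
    thus "p = q" using P2 by (cases p, cases q) fastforce
  qed
  have i2: "inj_on snd P"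
  proof (rule inj_onI)
    fix p q assume "p \<in> P" "q \<in> P" "snd p = snd q"
    thus "p = q" using P2 by (cases p, cases q) fastforce
  qed
  have dj: "fst ` P \<inter> snd ` P = {}"
  proof (rule ccontr)
    assume "fst ` P \<inter> snd ` P \<noteq> {}"
    then obtain p q where pq: "p \<in> P" "q \<in> P" "fst p = snd q" by auto
    show False
    proof (cases "p = q")
      case True thus False using pq P1 by (cases p) auto
    next
      case False thus False using pq P2 by (cases p, cases q) fastforce
    qed
  qed
  have c: "card (fst ` P \<union> snd ` P) = 2 * card P"
    using card_Un_disjoint[OF finite_imageI[OF fP] finite_imageI[OF fP] dj] card_image[OF i1] card_image[OF i2] by simp
  have "(\<Sum>x\<in>fst ` P \<union> snd ` P. sg x) = (\<Sum>x\<in>fst ` P. sg x) + (\<Sum>x\<in>snd ` P. sg x)"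
    using sum.union_disjoint[OF finite_imageI[OF fP] finite_imageI[OF fP] dj] by simp
  also have "\<dots> = (\<Sum>p\<in>P. sg (fst p)) + (\<Sum>p\<in>P. sg (snd p))"
    using sum.reindex[OF i1, of sg] sum.reindex[OF i2, of sg] by simp
  also have "\<dots> = (\<Sum>p\<in>P. sg (fst p) + sg (snd p))" by (simp add: sum.distrib)
  also have "\<dots> = 0" using P1 by (intro sum.neutral) auto
  finally show ?thesis using c by simp
qed

lemma inv_merge:
  assumes inv: "inv V pos sg s" and fin: "finite V"
    and t: "tight V pos atime sg s u v"
    and S: "S = actset s u \<union> actset s v"
    and P1: "\<forall>(a, b)\<in>P. a \<in> S \<and> b \<in> S \<and> a \<noteq> b \<and> sg a = - sg b \<and> free s a \<and> free s b"
    and P2: "\<forall>(a, b)\<in>P. \<forall>(c, d)\<in>P. (a, b) \<noteq> (c, d) \<longrightarrow> {a, b} \<inter> {c, d} = {}"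
    and s': "s' = s\<lparr> act := insert S (act s - {actset s u, actset s v}),
               matches := matches s \<union> {(a, b, clock s) | a b. (a, b) \<in> P} \<rparr>"
    and nf: "\<forall>a\<in>S. \<forall>b\<in>S. a \<noteq> b \<longrightarrow> sg a = - sg b \<longrightarrow> \<not> (free s' a \<and> free s' b)"
  shows "inv V pos sg s'"
proof -
  have AV: "arrived s \<subseteq> V" and P: "part s"
    and M: "\<forall>a b t. (a,b,t) \<in> matches s \<longrightarrow> (\<exists>A\<in>act s. a \<in> A \<and> b \<in> A)"
    and G: "\<forall>A\<in>act s. goodset sg s A" and Y1: "\<forall>S. yv s S \<ge> 0"
    and Y2: "\<forall>S. yv s S \<noteq> 0 \<longrightarrow> S \<noteq> {} \<and> (\<exists>A\<in>act s. S \<subseteq> A) \<and> sur V sg S \<ge> 1"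
    and D: "\<forall>A\<in>act s. distok pos (yv s) A"
    using inv unfolding inv_def by auto
  have Pn: "\<forall>A\<in>act s. A \<noteq> {}" and Pu: "\<Union>(act s) = arrived s"
    and Pd: "\<forall>A\<in>act s. \<forall>B\<in>act s. A \<noteq> B \<longrightarrow> A \<inter> B = {}" using P unfolding part_def by auto
  define A1 where "A1 = actset s u"
  define A2 where "A2 = actset s v"
  have ua: "u \<in> arrived s" and va: "v \<in> arrived s" and ne: "A1 \<noteq> A2"
    and ld: "load V (yv s) u v = cost pos atime u v"
    using t unfolding tight_def A1_def A2_def by auto
  have A1: "A1 \<in> act s" "u \<in> A1" using actset_in[OF P ua] A1_def by auto
  have A2: "A2 \<in> act s" "v \<in> A2" using actset_in[OF P va] A2_def by auto
  have dj: "A1 \<inter> A2 = {}" using Pd A1 A2 ne by blast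
  have A1V: "A1 \<subseteq> V" and A2V: "A2 \<subseteq> V" using A1 A2 Pu AV by blast+
  have f1: "finite A1" and f2: "finite A2" using A1V A2V fin finite_subset by blast+
  have SU: "S = A1 \<union> A2" using S A1_def A2_def by simp
  have fS: "finite S" using SU f1 f2 by simp
  have act': "act s' = insert S (act s - {A1, A2})" using s' A1_def A2_def by simp
  have arr': "arrived s' = arrived s" and yv': "yv s' = yv s" using s' by auto
  define R where "R = fst ` P \<union> snd ` P"
  have fP: "finite P"
  proof -
    have "P \<subseteq> S \<times> S" using P1 by auto
    thus ?thesis using fS finite_subset by blast
  qed
  have Pa: "a \<in> S \<and> b \<in> S \<and> free s a \<and> free s b" if "(a,b) \<in> P" for a b
    using P1 that by blast
  have R': "x \<in> R \<longleftrightarrow> (\<exists>w. (x,w) \<in> P \<or> (w,x) \<in> P)" for x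
    unfolding R_def by force
  have RS: "R \<subseteq> {x\<in>S. free s x}"
  proof
    fix x assume "x \<in> R"
    then obtain w where "(x,w) \<in> P \<or> (w,x) \<in> P" using R' by blast
    thus "x \<in> {x\<in>S. free s x}" using Pa by blast
  qed
  have mat: "(a,b,t) \<in> matches s' \<longleftrightarrow> (a,b,t) \<in> matches s \<or> ((a,b) \<in> P \<and> t = clock s)" for a b t
    using s' by auto
  have fr: "free s' x \<longleftrightarrow> free s x \<and> x \<notin> R" for x
    unfolding free_def arr' mat R' by blast
  have PF: "card R = 2 * card P \<and> (\<Sum>x\<in>R. sg x) = 0"
    unfolding R_def by (rule pairs_facts[OF fP]) (use P1 P2 in auto)
  have oth: "A \<inter> S = {}" if "A \<in> act s" "A \<noteq> A1" "A \<noteq> A2" for A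
    using that Pd A1 A2 SU by blast
  show ?thesis unfolding inv_def
  proof (intro conjI)
    show "arrived s' \<subseteq> V" using AV arr' by simp
    show "part s'" unfolding part_def act' arr'
    proof (intro conjI)
      show "\<forall>A\<in>insert S (act s - {A1, A2}). A \<noteq> {}" using Pn SU A1 by auto
      show "\<Union> (insert S (act s - {A1, A2})) = arrived s" using Pu SU A1(1) A2(1) by auto
      show "\<forall>A\<in>insert S (act s - {A1, A2}). \<forall>B\<in>insert S (act s - {A1, A2}). A \<noteq> B \<longrightarrow> A \<inter> B = {}"
      proof (intro ballI impI)
        fix A B assume A: "A \<in> insert S (act s - {A1, A2})" and B: "B \<in> insert S (act s - {A1, A2})" and ne: "A \<noteq> B"
        show "A \<inter> B = {}"
        proof (cases "A = S")
          case True
          hence "B \<in> act s" "B \<noteq> A1" "B \<noteq> A2" using B ne by auto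
          thus ?thesis using oth True by blast
        next
          case False
          hence A': "A \<in> act s" "A \<noteq> A1" "A \<noteq> A2" using A by auto
          show ?thesis
          proof (cases "B = S")
            case True thus ?thesis using oth[OF A'] by blast
          next
            case False
            hence "B \<in> act s" using B by auto
            thus ?thesis using Pd A'(1) ne by blast
          qed
        qed
      qed
    qed
    show "\<forall>a b t. (a,b,t) \<in> matches s' \<longrightarrow> (\<exists>A\<in>act s'. a \<in> A \<and> b \<in> A)"
    proof (intro allI impI)
      fix a b t assume "(a,b,t) \<in> matches s'"
      hence "(a,b,t) \<in> matches s \<or> (a,b) \<in> P" using s' by auto
      thus "\<exists>A\<in>act s'. a \<in> A \<and> b \<in> A"
      proof
        assume "(a,b,t) \<in> matches s"
        then obtain A where A: "A \<in> act s" "a \<in> A" "b \<in> A" using M by blast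
        show ?thesis
        proof (cases "A = A1 \<or> A = A2")
          case True thus ?thesis using A SU act' by auto
        next
          case False thus ?thesis using A act' by auto
        qed
      next
        assume "(a,b) \<in> P" thus ?thesis using P1 act' by auto
      qed
    qed
    show "\<forall>A\<in>act s'. goodset sg s' A"
    proof
      fix A assume "A \<in> act s'"
      hence "A = S \<or> (A \<in> act s \<and> A \<noteq> A1 \<and> A \<noteq> A2)" using act' by auto
      thus "goodset sg s' A"
      proof
        assume AS: "A = S"
        have g1: "goodset sg s A1" and g2: "goodset sg s A2" using G A1 A2 by auto
        let ?F1 = "{x\<in>A1. free s x}" and ?F2 = "{x\<in>A2. free s x}"
        let ?FS = "{x\<in>S. free s x}" and ?FS' = "{x\<in>S. free s' x}"
        have c1: "card A1 mod 2 = card ?F1 mod 2" and s1: "(\<Sum>x\<in>A1. sg x) = (\<Sum>x\<in>?F1. sg x)"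
          using g1 unfolding goodset_def by auto
        have c2: "card A2 mod 2 = card ?F2 mod 2" and s2: "(\<Sum>x\<in>A2. sg x) = (\<Sum>x\<in>?F2. sg x)"
          using g2 unfolding goodset_def by auto
        have FSu: "?FS = ?F1 \<union> ?F2" using SU by auto
        have fdj: "?F1 \<inter> ?F2 = {}" using dj by auto
        have ff1: "finite ?F1" and ff2: "finite ?F2" using f1 f2 by auto
        have fFS: "finite ?FS" using fS by auto
        have FS': "?FS' = ?FS - R" using fr by auto
        have cS: "card S = card A1 + card A2" using SU card_Un_disjoint[OF f1 f2 dj] by simp
        have cFS: "card ?FS = card ?F1 + card ?F2" using FSu card_Un_disjoint[OF ff1 ff2 fdj] by simp
        have cFS': "card ?FS' = card ?FS - card R" using FS' card_Diff_subset[OF finite_subset[OF RS fFS] RS] by simp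
        have cR: "card R \<le> card ?FS" using card_mono[OF fFS RS] .
        have "card S mod 2 = card ?FS' mod 2"
        proof -
          have e: "card R = 2 * card P" using PF by simp
          have g: "card ?FS = card ?FS' + 2 * card P" using cFS' cR e by linarith
          have "card S mod 2 = (card ?F1 + card ?F2) mod 2" using cS c1 c2 by (metis mod_add_cong)
          moreover have "(card ?FS' + 2 * card P) mod 2 = card ?FS' mod 2" by simp
          ultimately show ?thesis using cFS g by metis
        qed
        moreover have "(\<Sum>x\<in>S. sg x) = (\<Sum>x\<in>?FS'. sg x)"
        proof -
          have "(\<Sum>x\<in>S. sg x) = (\<Sum>x\<in>A1. sg x) + (\<Sum>x\<in>A2. sg x)" using SU sum.union_disjoint[OF f1 f2 dj] by simp
          also have "\<dots> = (\<Sum>x\<in>?F1. sg x) + (\<Sum>x\<in>?F2. sg x)" using s1 s2 by simp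
          also have "\<dots> = (\<Sum>x\<in>?F1 \<union> ?F2. sg x)" by (rule sum.union_disjoint[OF ff1 ff2 fdj, symmetric])
          also have "\<dots> = (\<Sum>x\<in>?FS. sg x)" using FSu by simp
          also have "\<dots> = (\<Sum>x\<in>?FS - R. sg x) + (\<Sum>x\<in>R. sg x)" using sum.subset_diff[OF RS fFS] by simp
          finally show ?thesis using FS' PF by simp
        qed
        ultimately show ?thesis using nf AS unfolding goodset_def by simp
      next
        assume A: "A \<in> act s \<and> A \<noteq> A1 \<and> A \<noteq> A2"
        have "goodset sg s' A = goodset sg s A"
          by (rule goodset_cong) (use fr oth[of A] A RS in auto)
        thus ?thesis using G A by simp
      qed
    qed
    show "\<forall>S. yv s' S \<ge> 0" using Y1 yv' by simp
    show "\<forall>T. yv s' T \<noteq> 0 \<longrightarrow> T \<noteq> {} \<and> (\<exists>A\<in>act s'. T \<subseteq> A) \<and> sur V sg T \<ge> 1"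
    proof (intro allI impI)
      fix T assume "yv s' T \<noteq> 0"
      hence h: "T \<noteq> {} \<and> (\<exists>A\<in>act s. T \<subseteq> A) \<and> sur V sg T \<ge> 1" using Y2 yv' by simp
      then obtain A where A: "A \<in> act s" "T \<subseteq> A" by blast
      have "\<exists>A\<in>act s'. T \<subseteq> A"
      proof (cases "A = A1 \<or> A = A2")
        case True thus ?thesis using A SU act' by auto
      next
        case False thus ?thesis using A act' by auto
      qed
      thus "T \<noteq> {} \<and> (\<exists>A\<in>act s'. T \<subseteq> A) \<and> sur V sg T \<ge> 1" using h by simp
    qed
    show "\<forall>A\<in>act s'. distok pos (yv s') A"
    proof
      fix A assume "A \<in> act s'"
      hence "A = S \<or> (A \<in> act s \<and> A \<noteq> A1 \<and> A \<noteq> A2)" using act' by auto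
      thus "distok pos (yv s') A"
      proof
        assume AS: "A = S"
        have y0: "yv s {} = 0" using Y2 by auto
        have ynn: "\<And>T. yv s T \<ge> 0" using Y1 by simp
        have D1: "distok pos (yv s) A1" and D2: "distok pos (yv s) A2" using D A1 A2 by auto
        have L: "dist (pos u) (pos v) \<le> (\<Sum>T\<in>Pow A1. ind u T * yv s T) + (\<Sum>T\<in>Pow A2. ind v T * yv s T)"
        proof -
          have "dist (pos u) (pos v) \<le> cost pos atime u v" unfolding cost_def by simp
          also have "\<dots> = load V (yv s) u v" using ld by simp
          also have "\<dots> \<le> (\<Sum>T\<in>Pow A1. ind u T * yv s T) + (\<Sum>T\<in>Pow A2. ind v T * yv s T)"
            by (rule load_bound[OF fin ynn _ Pd A1(1) A1V A1(2) A2(1) A2V A2(2)]) (use Y2 in blast)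
          finally show ?thesis .
        qed
        have L': "dist (pos v) (pos u) \<le> (\<Sum>T\<in>Pow A2. ind v T * yv s T) + (\<Sum>T\<in>Pow A1. ind u T * yv s T)"
          using L by (simp add: dist_commute)
        have dj': "A2 \<inter> A1 = {}" using dj by blast
        have "\<forall>x\<in>S. \<forall>z\<in>S. dist (pos x) (pos z) \<le> (\<Sum>T\<in>Pow S. (2 - ind x T - ind z T) * yv s T)"
        proof (intro ballI)
          fix x z assume x: "x \<in> S" and z: "z \<in> S"
          show "dist (pos x) (pos z) \<le> (\<Sum>T\<in>Pow S. (2 - ind x T - ind z T) * yv s T)"
          proof (cases "x \<in> A1")
            case xa: True
            show ?thesis
            proof (cases "z \<in> A1")
              case True thus ?thesis using distok_sub[OF D1 _ fS ynn xa True] SU by simp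
            next
              case False
              hence "z \<in> A2" using z SU by simp
              thus ?thesis using merge_dist[OF f1 f2 dj ynn y0 D1 D2 A1(2) A2(2) L xa] SU by simp
            qed
          next
            case xa: False
            hence xa2: "x \<in> A2" using x SU by simp
            show ?thesis
            proof (cases "z \<in> A2")
              case True thus ?thesis using distok_sub[OF D2 _ fS ynn xa2 True] SU by simp
            next
              case False
              hence "z \<in> A1" using z SU by simp
              thus ?thesis using merge_dist[OF f2 f1 dj' ynn y0 D2 D1 A2(2) A1(2) L' xa2] SU
                by (simp add: Un_commute)
            qed
          qed
        qed
        thus ?thesis unfolding distok_def AS yv' .
      next
        assume A: "A \<in> act s \<and> A \<noteq> A1 \<and> A \<noteq> A2"
        thus ?thesis using D yv' by simp
      qed
    qed
  qed
qed

lemma inv_step: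
  assumes "gd_step V pos atime sg s s'" "inv V pos sg s" "instance_ok V pos atime sg"
  shows "inv V pos sg s'"
  using assms(1)
proof cases
  case (arrive u)
  have "finite V" using assms(3) unfolding instance_ok_def by blast
  thus ?thesis using inv_arrive[OF assms(2)] arrive by simp
next
  case (merge u v S P)
  have "finite V" using assms(3) unfolding instance_ok_def by blast
  thus ?thesis using inv_merge[OF assms(2) _ merge(1) merge(2) merge(3) merge(4) merge(5) merge(6)] by simp
next
  case (advance \<tau>' y')
  thus ?thesis using inv_advance[OF assms(2) assms(3)] by simp
qed

theorem lemma7:
  fixes V :: "'r set" and pos :: "'r \<Rightarrow> 'p::metric_space"
    and atime :: "'r \<Rightarrow> real" and sg :: "'r \<Rightarrow> int" and s :: "'r gd_state"
  assumes "instance_ok V pos atime sg"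
    and "(gd_step V pos atime sg)\<^sup>*\<^sup>* gd_init s"
    and "arrived s = V" and "\<forall>u\<in>V. \<not> free s u"
    and "clock s = Max {t. \<exists>a b. (a, b, t) \<in> matches s}"
    and "(u, v, t) \<in> matches s"
  shows "dist (pos u) (pos v) \<le> 2 * (\<Sum>S\<in>Pow V. sur V sg S * yv s S)"
proof -
  have I: "inv V pos sg s"
    using assms(2)
  proof (induction rule: rtranclp_induct)
    case base show ?case by (rule inv_init)
  next
    case (step x z) thus ?case using inv_step assms(1) by blast
  qed
  have fin: "finite V" using assms(1) unfolding instance_ok_def by blast
  have AV: "arrived s \<subseteq> V" and P: "part s"
    and M: "\<forall>a b t. (a,b,t) \<in> matches s \<longrightarrow> (\<exists>A\<in>act s. a \<in> A \<and> b \<in> A)"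
    and Y1: "\<forall>S. yv s S \<ge> 0"
    and Y2: "\<forall>S. yv s S \<noteq> 0 \<longrightarrow> S \<noteq> {} \<and> (\<exists>A\<in>act s. S \<subseteq> A) \<and> sur V sg S \<ge> 1"
    and D: "\<forall>A\<in>act s. distok pos (yv s) A"
    using I unfolding inv_def by auto
  obtain A where A: "A \<in> act s" "u \<in> A" "v \<in> A" using M assms(6) by blast
  have AV': "A \<subseteq> V" using A(1) P AV unfolding part_def by blast
  have "dist (pos u) (pos v) \<le> (\<Sum>S\<in>Pow A. (2 - ind u S - ind v S) * yv s S)"
    using D A unfolding distok_def by blast
  also have "\<dots> \<le> (\<Sum>S\<in>Pow A. 2 * (sur V sg S * yv s S))"
  proof (rule sum_mono)
    fix S assume "S \<in> Pow A"
    show "(2 - ind u S - ind v S) * yv s S \<le> 2 * (sur V sg S * yv s S)"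
    proof (cases "yv s S = 0")
      case True thus ?thesis by simp
    next
      case False
      hence s1: "sur V sg S \<ge> 1" using Y2 by blast
      have y0: "yv s S \<ge> 0" using Y1 by blast
      have "(2 - ind u S - ind v S) * yv s S \<le> 2 * yv s S"
        using y0 by (intro mult_right_mono) (auto simp: ind_def)
      also have "\<dots> \<le> 2 * (sur V sg S * yv s S)"
        using mult_right_mono[OF s1 y0] by simp
      finally show ?thesis .
    qed
  qed
  also have "\<dots> \<le> (\<Sum>S\<in>Pow V. 2 * (sur V sg S * yv s S))"
  proof (rule sum_mono2)
    show "finite (Pow V)" using fin by simp
    show "Pow A \<subseteq> Pow V" using AV' by auto
    show "\<And>b. b \<in> Pow V - Pow A \<Longrightarrow> 0 \<le> 2 * (sur V sg b * yv s b)"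
    proof -
      fix b
      have "0 \<le> sur V sg b" by (rule sur_nn)
      moreover have "0 \<le> yv s b" using Y1 by blast
      ultimately show "0 \<le> 2 * (sur V sg b * yv s b)" by simp
    qed
  qed
  also have "\<dots> = 2 * (\<Sum>S\<in>Pow V. sur V sg S * yv s S)" by (simp add: sum_distrib_left)
  finally show ?thesis .
qed

end
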